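(* Let $G$ be an arbitrary connected graph on $n$ vertices, let $0<p<\frac{1}{2}$ be a noise parameter and let $0<\delta<\frac{1}{2}$ be a confidence threshold. There exists an adaptive Las Vegas graph searching algorithm (in the noisy graph search model described in the context, with an adversarially fixed target) that, after an expected number of at most $$\frac{1}{I(p)}\left(\log_2 n+\mathcal{O}(\log\log n)+\mathcal{O}(\log \delta^{-1})\right)$$ queries, returns the target correctly with probability at least $1-\delta$, for every choice of the target.
   Context: Noisy graph search model: $G=(V,E)$ is an undirected, unweighted connected graph and $v^*\in V$ is an unknown target. In each step the algorithm queries a vertex $q$. A correct answer is "yes" if $q=v^*$, and otherwise is a neighbor $u$ of $q$ lying on a shortest path from $q$ to $v^*$. Each answer, independently, is erroneous with probability $p$ (in which case it may be an arbitrary different answer); otherwise it is correct. The algorithm is adaptive; in the adversarial model the target is fixed in advance by an adversary who knows the algorithm, and in the Las Vegas setting the number of queries is random and the bound is on its expectation (for every fixed target). $H(p)=-p\log_2 p-(1-p)\log_2(1-p)$ and $I(p)=1-H(p)$. *)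

theory Defs
  imports "HOL-Probability.Probability"
begin

definition Hb :: "real \<Rightarrow> real" where
  "Hb p = - p * log 2 p - (1 - p) * log 2 (1 - p)"

definition Ip :: "real \<Rightarrow> real" where
  "Ip p = 1 - Hb p"

definition graph_ok :: "nat set \<Rightarrow> (nat \<Rightarrow> nat \<Rightarrow> bool) \<Rightarrow> bool" where
  "graph_ok V E \<longleftrightarrow> finite V \<and> V \<noteq> {} \<and>
     (\<forall>x y. E x y \<longrightarrow> x \<in> V \<and> y \<in> V \<and> E y x \<and> x \<noteq> y) \<and>
     (\<forall>u\<in>V. \<forall>v\<in>V. (u, v) \<in> {(x, y). E x y}\<^sup>*)"

definition gdist :: "(nat \<Rightarrow> nat \<Rightarrow> bool) \<Rightarrow> nat \<Rightarrow> nat \<Rightarrow> nat" where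
  "gdist E u v = (LEAST k. (u, v) \<in> {(x, y). E x y} ^^ k)"

text \<open>Answers: None = "yes", Some u = neighbour u.\<close>
definition correct_answers :: "(nat \<Rightarrow> nat \<Rightarrow> bool) \<Rightarrow> nat \<Rightarrow> nat \<Rightarrow> nat option set" where
  "correct_answers E q t =
     (if q = t then {None}
      else Some ` {u. E q u \<and> gdist E u t + 1 = gdist E q t})"

definition other_answers :: "(nat \<Rightarrow> nat \<Rightarrow> bool) \<Rightarrow> nat \<Rightarrow> nat option \<Rightarrow> nat option set" where
  "other_answers E q c = insert None (Some ` {u. E q u}) - {c}"

type_synonym history = "(nat \<times> nat option) list"

datatype action = Ask nat | Output nat

datatype state = Running history | Halted nat

text \<open>An adversary (knowing the target t) chooses, depending on the history and
  the query, which correct answer is given and which erroneous answer is given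
  in case of an error.\<close>
definition valid_adversary ::
  "nat set \<Rightarrow> (nat \<Rightarrow> nat \<Rightarrow> bool) \<Rightarrow> nat \<Rightarrow> (history \<Rightarrow> nat \<Rightarrow> nat option \<times> nat option) \<Rightarrow> bool" where
  "valid_adversary V E t adv \<longleftrightarrow>
     (\<forall>h q. q \<in> V \<longrightarrow>
        fst (adv h q) \<in> correct_answers E q t \<and>
        (if other_answers E q (fst (adv h q)) = {} then snd (adv h q) = fst (adv h q)
         else snd (adv h q) \<in> other_answers E q (fst (adv h q))))"

definition valid_alg :: "nat set \<Rightarrow> (history \<Rightarrow> action pmf) \<Rightarrow> bool" where
  "valid_alg V alg \<longleftrightarrow> (\<forall>h q. Ask q \<in> set_pmf (alg h) \<longrightarrow> q \<in> V)"

definition answer_pmf ::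
  "real \<Rightarrow> (history \<Rightarrow> nat \<Rightarrow> nat option \<times> nat option) \<Rightarrow> history \<Rightarrow> nat \<Rightarrow> nat option pmf" where
  "answer_pmf p adv h q =
     map_pmf (\<lambda>err. if err then snd (adv h q) else fst (adv h q)) (bernoulli_pmf p)"

definition step ::
  "(history \<Rightarrow> action pmf) \<Rightarrow> real \<Rightarrow> (history \<Rightarrow> nat \<Rightarrow> nat option \<times> nat option) \<Rightarrow> state \<Rightarrow> state pmf" where
  "step alg p adv s = (case s of
      Halted v \<Rightarrow> return_pmf (Halted v)
    | Running h \<Rightarrow> bind_pmf (alg h) (\<lambda>a. case a of
          Output v \<Rightarrow> return_pmf (Halted v)
        | Ask q \<Rightarrow> map_pmf (\<lambda>ans. Running (h @ [(q, ans)])) (answer_pmf p adv h q)))"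

primrec run ::
  "(history \<Rightarrow> action pmf) \<Rightarrow> real \<Rightarrow> (history \<Rightarrow> nat \<Rightarrow> nat option \<times> nat option) \<Rightarrow> nat \<Rightarrow> state pmf" where
  "run alg p adv 0 = return_pmf (Running [])"
| "run alg p adv (Suc k) = bind_pmf (run alg p adv k) (step alg p adv)"

definition is_running :: "state \<Rightarrow> bool" where
  "is_running s = (case s of Running _ \<Rightarrow> True | Halted _ \<Rightarrow> False)"

text \<open>Expected number of queries T: E[T] = sum over k of P(T > k), and T > k iff
  the process is still running after k+1 rounds (it has then asked k+1 queries).
  Value \<infinity> if the algorithm does not terminate almost surely.\<close>
definition expected_queries ::
  "(history \<Rightarrow> action pmf) \<Rightarrow> real \<Rightarrow> (history \<Rightarrow> nat \<Rightarrow> nat option \<times> nat option) \<Rightarrow> ennreal" where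
  "expected_queries alg p adv =
     (\<Sum>k. ennreal (measure_pmf.prob (run alg p adv (Suc k)) {s. is_running s}))"

definition success_prob ::
  "(history \<Rightarrow> action pmf) \<Rightarrow> real \<Rightarrow> (history \<Rightarrow> nat \<Rightarrow> nat option \<times> nat option) \<Rightarrow> nat \<Rightarrow> real" where
  "success_prob alg p adv t = (SUP k. measure_pmf.prob (run alg p adv k) {Halted t})"

end

theory Submission
  imports Defs
begin


definition ind_run :: "state \<Rightarrow> real" where
  "ind_run s = (if is_running s then 1 else 0)"

lemma finite_answer: "finite (set_pmf (answer_pmf p adv h q))"
  unfolding answer_pmf_def by simp

lemma finite_step:
  assumes fin: "\<And>h. finite (set_pmf (alg h))"
  shows "finite (set_pmf (step alg p adv s))"
proof (cases s)
  case (Running h)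
  have "finite (\<Union>a\<in>set_pmf (alg h). set_pmf (case a of Output v \<Rightarrow> return_pmf (Halted v)
        | Ask q \<Rightarrow> map_pmf (\<lambda>ans. Running (h @ [(q, ans)])) (answer_pmf p adv h q)))"
    using fin by (intro finite_UN_I) (auto split: action.split simp: finite_answer)
  then show ?thesis using Running by (simp add: step_def)
next
  case (Halted v)
  then show ?thesis by (simp add: step_def)
qed

lemma finite_run:
  assumes fin: "\<And>h. finite (set_pmf (alg h))"
  shows "finite (set_pmf (run alg p adv k))"
  by (induction k) (auto simp: finite_step[OF fin])

lemma expectation_finite_sum:
  assumes "finite (set_pmf M)"
  shows "measure_pmf.expectation M (f :: _ \<Rightarrow> real) = (\<Sum>s\<in>set_pmf M. pmf M s * f s)"
  using integral_measure_pmf[OF assms, of M f] by simp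

lemma expectation_run_Suc:
  assumes fin: "\<And>h. finite (set_pmf (alg h))"
  shows "measure_pmf.expectation (run alg p adv (Suc k)) (f :: _ \<Rightarrow> real) =
     (\<Sum>s\<in>set_pmf (run alg p adv k). pmf (run alg p adv k) s * measure_pmf.expectation (step alg p adv s) f)"
proof -
  have "measure_pmf.expectation (run alg p adv k \<bind> step alg p adv) f =
     (\<Sum>s\<in>set_pmf (run alg p adv k). pmf (run alg p adv k) s *\<^sub>R measure_pmf.expectation (step alg p adv s) f)"
    by (rule pmf_expectation_bind) (auto simp: finite_run[OF fin] finite_step[OF fin])
  then show ?thesis by simp
qed

lemma drift_lower:
  fixes f :: "state \<Rightarrow> real"
  assumes fin: "\<And>h. finite (set_pmf (alg h))"
  and dr: "\<And>s. measure_pmf.expectation (step alg p adv s) f \<ge> f s + c * measure_pmf.expectation (step alg p adv s) ind_run"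
  shows "measure_pmf.expectation (run alg p adv k) f \<ge> f (Running []) + c * (\<Sum>j<k. measure_pmf.expectation (run alg p adv (Suc j)) ind_run)"
proof (induction k)
  case 0
  then show ?case by simp
next
  case (Suc k)
  let ?M = "run alg p adv k"
  have "measure_pmf.expectation (run alg p adv (Suc k)) f =
     (\<Sum>s\<in>set_pmf ?M. pmf ?M s * measure_pmf.expectation (step alg p adv s) f)"
    by (rule expectation_run_Suc[OF fin])
  also have "\<dots> \<ge> (\<Sum>s\<in>set_pmf ?M. pmf ?M s * (f s + c * measure_pmf.expectation (step alg p adv s) ind_run))"
    by (intro sum_mono mult_left_mono dr) auto
  also have "(\<Sum>s\<in>set_pmf ?M. pmf ?M s * (f s + c * measure_pmf.expectation (step alg p adv s) ind_run))
     = measure_pmf.expectation ?M f + c * measure_pmf.expectation (run alg p adv (Suc k)) ind_run"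
  proof -
    have 1: "measure_pmf.expectation ?M f = (\<Sum>s\<in>set_pmf ?M. pmf ?M s * f s)"
      by (rule expectation_finite_sum[OF finite_run[OF fin]])
    have 2: "measure_pmf.expectation (run alg p adv (Suc k)) ind_run = 
       (\<Sum>s\<in>set_pmf ?M. pmf ?M s * measure_pmf.expectation (step alg p adv s) ind_run)"
      by (rule expectation_run_Suc[OF fin])
    show ?thesis unfolding 1 2 by (simp add: sum.distrib sum_distrib_left algebra_simps)
  qed
  finally show ?case using Suc by (simp add: distrib_left del: run.simps)
qed

lemma expectation_ind_run: "measure_pmf.expectation M ind_run = measure_pmf.prob M {s. is_running s}"
proof -
  have "ind_run = indicator {s. is_running s}" by (auto simp: ind_run_def fun_eq_iff)
  then show ?thesis using Bochner_Integration.integral_indicator[of "measure_pmf M" "{s. is_running s}"] by simp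
qed

lemma expectation_answer:
  assumes "0 \<le> p" "p \<le> 1"
  shows "measure_pmf.expectation (answer_pmf p adv h q) (F :: _ \<Rightarrow> real) =
    p * F (snd (adv h q)) + (1 - p) * F (fst (adv h q))"
  using assms by (simp add: answer_pmf_def)

lemma step_Halted: "step alg p adv (Halted v) = return_pmf (Halted v)"
  by (simp add: step_def)

lemma step_Output: "alg h = return_pmf (Output v) \<Longrightarrow> step alg p adv (Running h) = return_pmf (Halted v)"
  by (simp add: step_def bind_return_pmf)

lemma step_Ask: "alg h = return_pmf (Ask q) \<Longrightarrow> step alg p adv (Running h) =
   map_pmf (\<lambda>ans. Running (h @ [(q, ans)])) (answer_pmf p adv h q)"
  by (simp add: step_def bind_return_pmf)

lemma expectation_step_Ask:
  assumes "alg h = return_pmf (Ask q)" "0 \<le> p" "p \<le> 1"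
  shows "measure_pmf.expectation (step alg p adv (Running h)) (F :: _ \<Rightarrow> real) =
    p * F (Running (h @ [(q, snd (adv h q))])) + (1 - p) * F (Running (h @ [(q, fst (adv h q))]))"
  using assms by (simp add: step_Ask expectation_answer)

lemma ind_run_simps[simp]: "ind_run (Running h) = 1" "ind_run (Halted v) = 0"
  by (auto simp: ind_run_def is_running_def)



lemma gdist_path:
  assumes "graph_ok V E" "u \<in> V" "v \<in> V"
  shows "(u, v) \<in> {(x, y). E x y} ^^ gdist E u v"
proof -
  from assms have "(u, v) \<in> {(x, y). E x y}\<^sup>*" by (auto simp: graph_ok_def)
  then obtain k where "(u, v) \<in> {(x, y). E x y} ^^ k" using rtrancl_power by blast
  then show ?thesis unfolding gdist_def by (rule LeastI)
qed

lemma gdist_le: "(u, v) \<in> {(x, y). E x y} ^^ k \<Longrightarrow> gdist E u v \<le> k"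
  unfolding gdist_def by (rule Least_le)

lemma gdist_nbr:
  assumes g: "graph_ok V E" and e: "E q u" and v: "v \<in> V"
  shows "gdist E u v \<le> gdist E q v + 1"
proof -
  have q: "q \<in> V" and uq: "E u q" using g e by (auto simp: graph_ok_def)
  have "(u, v) \<in> {(x, y). E x y} ^^ Suc (gdist E q v)"
    by (rule relpow_Suc_I2[OF _ gdist_path[OF g q v]]) (use uq in auto)
  then show ?thesis using gdist_le by fastforce
qed

lemma median_prop:
  fixes w :: "nat \<Rightarrow> real"
  assumes g: "graph_ok V E" and w: "\<And>v. v \<in> V \<Longrightarrow> 0 \<le> w v" and q: "q \<in> V"
    and mn: "\<And>q'. q' \<in> V \<Longrightarrow> (\<Sum>v\<in>V. w v * real (gdist E q v)) \<le> (\<Sum>v\<in>V. w v * real (gdist E q' v))"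
    and e: "E q u"
  shows "2 * (\<Sum>v\<in>{v\<in>V. gdist E u v + 1 = gdist E q v}. w v) \<le> (\<Sum>v\<in>V. w v)"
proof -
  have fin: "finite V" using g by (auto simp: graph_ok_def)
  have u: "u \<in> V" using g e by (auto simp: graph_ok_def)
  let ?N = "{v\<in>V. gdist E u v + 1 = gdist E q v}"
  have pt: "w v * real (gdist E u v) \<le> w v * (real (gdist E q v) + 1) - 2 * (if gdist E u v + 1 = gdist E q v then w v else 0)"
    if "v \<in> V" for v
  proof (cases "gdist E u v + 1 = gdist E q v")
    case True
    then have "real (gdist E u v) = real (gdist E q v) - 1" by linarith
    then have "w v * real (gdist E u v) = w v * real (gdist E q v) - w v" by (simp add: right_diff_distrib)
    then show ?thesis using True by (simp add: distrib_left)
  next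
    case False
    have "real (gdist E u v) \<le> real (gdist E q v) + 1" using gdist_nbr[OF g e that] by linarith
    then show ?thesis using False w[OF that] by (simp add: mult_left_mono)
  qed
  have "(\<Sum>v\<in>V. w v * real (gdist E q v)) \<le> (\<Sum>v\<in>V. w v * real (gdist E u v))" by (rule mn[OF u])
  also have "\<dots> \<le> (\<Sum>v\<in>V. w v * (real (gdist E q v) + 1) - 2 * (if gdist E u v + 1 = gdist E q v then w v else 0))"
    by (rule sum_mono) (rule pt)
  also have "\<dots> = (\<Sum>v\<in>V. w v * real (gdist E q v)) + (\<Sum>v\<in>V. w v) - 2 * (\<Sum>v\<in>?N. w v)"
    by (simp add: sum_subtractf sum.distrib algebra_simps sum_distrib_left[symmetric] sum.inter_filter[OF fin])
  finally show ?thesis by simp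
qed

definition fac :: "real \<Rightarrow> (nat \<Rightarrow> nat \<Rightarrow> bool) \<Rightarrow> nat \<times> nat option \<Rightarrow> nat \<Rightarrow> real" where
  "fac p E x v = (if snd x \<in> correct_answers E (fst x) v then 2 * (1 - p) else 2 * p)"

definition wt :: "real \<Rightarrow> (nat \<Rightarrow> nat \<Rightarrow> bool) \<Rightarrow> history \<Rightarrow> nat \<Rightarrow> real" where
  "wt p E h v = prod_list (map (\<lambda>x. fac p E x v) h)"

definition Wt :: "real \<Rightarrow> (nat \<Rightarrow> nat \<Rightarrow> bool) \<Rightarrow> nat set \<Rightarrow> history \<Rightarrow> real" where
  "Wt p E V h = (\<Sum>v\<in>V. wt p E h v)"

definition cnt :: "history \<Rightarrow> nat \<Rightarrow> int" where
  "cnt h v = sum_list (map (\<lambda>x. if fst x = v then (if snd x = None then 1 else -1) else 0) h)"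

definition SW :: "real \<Rightarrow> (nat \<Rightarrow> nat \<Rightarrow> bool) \<Rightarrow> nat set \<Rightarrow> history \<Rightarrow> nat \<Rightarrow> nat option \<Rightarrow> real" where
  "SW p E V h q a = (\<Sum>v\<in>{v\<in>V. a \<in> correct_answers E q v}. wt p E h v)"

lemma wt_Nil[simp]: "wt p E [] v = 1" by (simp add: wt_def)
lemma wt_snoc[simp]: "wt p E (h @ [x]) v = wt p E h v * fac p E x v" by (simp add: wt_def)
lemma cnt_Nil[simp]: "cnt [] v = 0" by (simp add: cnt_def)
lemma cnt_snoc[simp]: "cnt (h @ [x]) v = cnt h v + (if fst x = v then (if snd x = None then 1 else -1) else 0)"
  by (simp add: cnt_def)

lemma cnt_queried: "cnt h v \<noteq> 0 \<Longrightarrow> v \<in> fst ` set h"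
  by (induction h rule: rev_induct) (auto split: if_splits)

lemma fac_pos: "0 < p \<Longrightarrow> p < 1 \<Longrightarrow> 0 < fac p E x v" by (simp add: fac_def)
lemma wt_pos: "0 < p \<Longrightarrow> p < 1 \<Longrightarrow> 0 < wt p E h v"
  by (induction h rule: rev_induct) (auto simp: fac_pos)

lemma Wt_snoc:
  assumes "finite V"
  shows "Wt p E V (h @ [(q, a)]) = 2 * p * Wt p E V h + 2 * (1 - 2 * p) * SW p E V h q a"
proof -
  have "Wt p E V (h @ [(q, a)]) = (\<Sum>v\<in>V. 2 * p * wt p E h v + 2 * (1 - 2 * p) * (if a \<in> correct_answers E q v then wt p E h v else 0))"
    unfolding Wt_def by (intro sum.cong) (auto simp: fac_def algebra_simps)
  also have "\<dots> = 2 * p * Wt p E V h + 2 * (1 - 2 * p) * SW p E V h q a"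
    by (simp add: sum.distrib Wt_def SW_def sum_distrib_left[symmetric] sum.inter_filter[OF assms])
  finally show ?thesis .
qed



lemma log2_ln: "log 2 x = ln x / ln 2" by (simp add: log_def)

lemma Ip_eq:
  assumes "0 < p" "p < 1"
  shows "Ip p = (1 - p) * log 2 (2 * (1 - p)) + p * log 2 (2 * p)"
proof -
  have "log 2 (2 * (1 - p)) = log 2 2 + log 2 (1 - p)" using assms by (subst log_mult) auto
  moreover have "log 2 (2 * p) = log 2 2 + log 2 p" using assms by (subst log_mult) auto
  ultimately show ?thesis by (simp add: Ip_def Hb_def algebra_simps)
qed

lemma Ip_pos:
  assumes "0 < p" "p < 1/2"
  shows "0 < Ip p"
proof -
  have a: "ln (1 / (2 * (1 - p))) \<le> 1 / (2 * (1 - p)) - 1" using assms by (intro ln_le_minus_one) auto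
  have ne: "1 / (2 * p) \<noteq> 1" using assms by (auto simp: field_simps)
  have "ln (1 / (2 * p)) \<noteq> 1 / (2 * p) - 1" using ln_eq_minus_one[of "1/(2*p)"] ne assms by auto
  then have b: "ln (1 / (2 * p)) < 1 / (2 * p) - 1" using ln_le_minus_one[of "1/(2*p)"] assms by auto
  have "(1 - p) * ln (1 / (2 * (1 - p))) + p * ln (1 / (2 * p)) < (1 - p) * (1 / (2 * (1 - p)) - 1) + p * (1 / (2 * p) - 1)"
    using mult_left_mono[OF a, of "1-p"] mult_strict_left_mono[OF b, of p] assms by linarith
  also have "\<dots> = 0" using assms by (simp add: field_simps)
  finally have c: "(1 - p) * ln (1 / (2 * (1 - p))) + p * ln (1 / (2 * p)) < 0" .
  have "ln (1 / (2 * (1 - p))) = - ln (2 * (1 - p))" using assms by (simp add: ln_div)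
  moreover have "ln (1 / (2 * p)) = - ln (2 * p)" using assms by (simp add: ln_div)
  ultimately have "0 < (1 - p) * ln (2 * (1 - p)) + p * ln (2 * p)" using c by simp
  then have "0 < ((1 - p) * ln (2 * (1 - p)) + p * ln (2 * p)) / ln 2" by simp
  then show ?thesis using assms by (simp add: Ip_eq log2_ln add_divide_distrib)
qed

lemma drift_wt:
  assumes "0 < p" "p < 1" "2 * p \<le> fe"
  shows "Ip p \<le> p * log 2 fe + (1 - p) * log 2 (2 * (1 - p))"
proof -
  have "log 2 (2 * p) \<le> log 2 fe" using assms by simp
  then show ?thesis using assms by (simp add: Ip_eq mult_left_mono algebra_simps)
qed

lemma good_ineq:
  assumes p: "0 < p" "p < 1/2" and s: "0 \<le> sc" "sc \<le> 1/2" "0 \<le> se" "sc + se \<le> 1"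
  shows "(1 - p) * log 2 (2 * p + 2 * (1 - 2 * p) * sc) + p * log 2 (2 * p + 2 * (1 - 2 * p) * se) \<le> 0"
proof -
  define x where "x = (1 - 2 * p) * (1 - 2 * sc)"
  have x0: "0 \<le> x" using p s by (auto simp: x_def)
  have x1': "x \<le> 1 - 2 * p" using p s unfolding x_def by (intro mult_left_le) auto
  have x1: "x < 1" using x1' p by linarith
  have e1: "2 * p + 2 * (1 - 2 * p) * sc = 1 - x" by (simp add: x_def algebra_simps)
  have m: "(1 - 2 * p) * se \<le> (1 - 2 * p) * (1 - sc)" using p s by (intro mult_left_mono) auto
  have e2: "2 * p + 2 * (1 - 2 * p) * se \<le> 1 + x" using m unfolding x_def
    by (simp add: algebra_simps)
  have pe0: "0 \<le> (1 - 2 * p) * se" using p s by simp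
  have pe: "0 < 2 * p + 2 * (1 - 2 * p) * se" using p pe0 by linarith
  have l1: "ln (1 - x) \<le> - x" using ln_le_minus_one[of "1 - x"] x1 by simp
  have "ln (2 * p + 2 * (1 - 2 * p) * se) \<le> ln (1 + x)" using e2 pe by simp
  also have "\<dots> \<le> x" using ln_add_one_self_le_self x0 by simp
  finally have l2: "ln (2 * p + 2 * (1 - 2 * p) * se) \<le> x" .
  have "(1 - p) * ln (1 - x) + p * ln (2 * p + 2 * (1 - 2 * p) * se) \<le> (1 - p) * (- x) + p * x"
    using mult_left_mono[OF l1, of "1-p"] mult_left_mono[OF l2, of p] p by linarith
  also have "\<dots> = - ((1 - 2 * p) * x)" by (simp add: algebra_simps)
  also have "\<dots> \<le> 0" using p x0 by simp
  finally have "(1 - p) * ln (1 - x) + p * ln (2 * p + 2 * (1 - 2 * p) * se) \<le> 0" .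
  then have "((1 - p) * ln (1 - x) + p * ln (2 * p + 2 * (1 - 2 * p) * se)) / ln 2 \<le> 0"
    by (simp add: divide_nonpos_pos)
  then show ?thesis unfolding e1 log2_ln by (simp add: add_divide_distrib)
qed

lemma rho_le1:
  assumes "0 < p" "p < 1/2" "0 \<le> s" "s \<le> 1"
  shows "log 2 (2 * p + 2 * (1 - 2 * p) * s) \<le> 1"
proof -
  have a: "(1 - 2 * p) * s \<le> 1 - 2 * p" using assms by (intro mult_left_le) auto
  have b: "0 \<le> (1 - 2 * p) * s" using assms by simp
  have "2 * p + 2 * (1 - 2 * p) * s \<le> 2" using a assms by linarith
  moreover have "0 < 2 * p + 2 * (1 - 2 * p) * s" using b assms by linarith
  ultimately show ?thesis by (simp add: log_le_one_cancel_iff)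
qed



definition heavy :: "real \<Rightarrow> (nat \<Rightarrow> nat \<Rightarrow> bool) \<Rightarrow> nat set \<Rightarrow> history \<Rightarrow> nat \<Rightarrow> bool" where
  "heavy p E V h v \<longleftrightarrow> v \<in> V \<and> Wt p E V h < 2 * wt p E h v"

definition Phi :: "real \<Rightarrow> (nat \<Rightarrow> nat \<Rightarrow> bool) \<Rightarrow> nat set \<Rightarrow> history \<Rightarrow> nat \<Rightarrow> real" where
  "Phi p E V h q = (\<Sum>v\<in>V. wt p E h v * real (gdist E q v))"

definition median :: "real \<Rightarrow> (nat \<Rightarrow> nat \<Rightarrow> bool) \<Rightarrow> nat set \<Rightarrow> history \<Rightarrow> nat" where
  "median p E V h = (SOME q. q \<in> V \<and> (\<forall>q'\<in>V. Phi p E V h q \<le> Phi p E V h q'))"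

definition act :: "real \<Rightarrow> (nat \<Rightarrow> nat \<Rightarrow> bool) \<Rightarrow> nat set \<Rightarrow> int \<Rightarrow> history \<Rightarrow> action" where
  "act p E V K h = (if \<exists>v. K \<le> cnt h v then Output (SOME v. K \<le> cnt h v)
     else if \<exists>v. heavy p E V h v then Ask (SOME v. heavy p E V h v)
     else Ask (median p E V h))"

definition salg :: "real \<Rightarrow> (nat \<Rightarrow> nat \<Rightarrow> bool) \<Rightarrow> nat set \<Rightarrow> int \<Rightarrow> history \<Rightarrow> action pmf" where
  "salg p E V K h = return_pmf (act p E V K h)"

lemma median_ex:
  assumes "finite V" "V \<noteq> {}"
  shows "median p E V h \<in> V \<and> (\<forall>q'\<in>V. Phi p E V h (median p E V h) \<le> Phi p E V h q')"
proof -
  have "Min (Phi p E V h ` V) \<in> Phi p E V h ` V" using assms by simp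
  then obtain q where q: "q \<in> V" "Phi p E V h q = Min (Phi p E V h ` V)" by auto
  have "\<forall>q'\<in>V. Phi p E V h q \<le> Phi p E V h q'" using q assms by auto
  then have "\<exists>q. q \<in> V \<and> (\<forall>q'\<in>V. Phi p E V h q \<le> Phi p E V h q')" using q by blast
  then show ?thesis unfolding median_def by (rule someI_ex)
qed

lemma valid_salg:
  assumes "finite V" "V \<noteq> {}"
  shows "valid_alg V (salg p E V K)"
  unfolding valid_alg_def
proof (intro allI impI)
  fix h q assume "Ask q \<in> set_pmf (salg p E V K h)"
  then have a: "act p E V K h = Ask q" by (simp add: salg_def)
  show "q \<in> V"
  proof (cases "\<exists>v. heavy p E V h v")
    case True
    then have "heavy p E V h (SOME v. heavy p E V h v)" by (rule someI_ex)
    then show ?thesis using a True by (auto simp: act_def heavy_def split: if_splits)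
  next
    case False
    then show ?thesis using a median_ex[OF assms] by (auto simp: act_def split: if_splits)
  qed
qed

lemma SW_None: "q \<in> V \<Longrightarrow> SW p E V h q None = wt p E h q"
proof -
  assume q: "q \<in> V"
  have "{v\<in>V. None \<in> correct_answers E q v} = {q}" using q by (auto simp: correct_answers_def)
  then show ?thesis by (simp add: SW_def)
qed

lemma SW_nonneg: "0 < p \<Longrightarrow> p < 1 \<Longrightarrow> 0 \<le> SW p E V h q a"
  unfolding SW_def by (intro sum_nonneg) (simp add: wt_pos less_imp_le)

lemma SW_le_Wt: "finite V \<Longrightarrow> 0 < p \<Longrightarrow> p < 1 \<Longrightarrow> SW p E V h q a \<le> Wt p E V h"
  unfolding SW_def Wt_def by (intro sum_mono2) (auto simp: wt_pos less_imp_le)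

lemma SW_Some:
  assumes "finite V" "0 < p" "p < 1" "q \<in> V"
  shows "SW p E V h q (Some u) \<le> Wt p E V h - wt p E h q"
proof -
  have "SW p E V h q (Some u) \<le> (\<Sum>v\<in>V - {q}. wt p E h v)"
    unfolding SW_def using assms
    by (intro sum_mono2) (auto simp: wt_pos less_imp_le correct_answers_def)
  also have "\<dots> = Wt p E V h - wt p E h q" using assms by (simp add: Wt_def sum_diff1)
  finally show ?thesis .
qed

lemma SW_Some_med:
  assumes "finite V" "0 < p" "p < 1" "E q u"
  shows "SW p E V h q (Some u) \<le> (\<Sum>v\<in>{v\<in>V. gdist E u v + 1 = gdist E q v}. wt p E h v)"
  unfolding SW_def using assms
  by (intro sum_mono2) (auto simp: wt_pos less_imp_le correct_answers_def split: if_splits)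

lemma SW_Some_nonE:
  assumes "\<not> E q u"
  shows "SW p E V h q (Some u) = 0"
proof -
  have "{v\<in>V. Some u \<in> correct_answers E q v} = {}" using assms by (auto simp: correct_answers_def)
  then show ?thesis unfolding SW_def by (simp only: sum.empty)
qed

lemma Wt_pos: "finite V \<Longrightarrow> t \<in> V \<Longrightarrow> 0 < p \<Longrightarrow> p < 1 \<Longrightarrow> 0 < Wt p E V h"
  unfolding Wt_def by (rule sum_pos2[of V t]) (auto simp: wt_pos less_imp_le)

lemma wt_le_Wt: "finite V \<Longrightarrow> t \<in> V \<Longrightarrow> 0 < p \<Longrightarrow> p < 1 \<Longrightarrow> wt p E h t \<le> Wt p E V h"
  unfolding Wt_def by (rule member_le_sum) (auto simp: wt_pos less_imp_le)



locale srch =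
  fixes p :: real and E :: "nat \<Rightarrow> nat \<Rightarrow> bool" and V :: "nat set" and K :: int and t :: nat
    and adv :: "history \<Rightarrow> nat \<Rightarrow> nat option \<times> nat option"
  assumes g: "graph_ok V E" and p0: "0 < p" and p1: "p < 1/2" and tV: "t \<in> V"
    and adv: "valid_adversary V E t adv" and K1: "1 \<le> K"
begin

lemma finV: "finite V" "V \<noteq> {}" using g by (auto simp: graph_ok_def)
lemma p1': "p < 1" using p1 by simp

definition X where "X h = log 2 (wt p E h t / Wt p E V h)"
definition rho where "rho h q a = 2 * p + 2 * (1 - 2 * p) * (SW p E V h q a / Wt p E V h)"

lemma Wpos: "0 < Wt p E V h" using Wt_pos[OF finV(1) tV p0 p1'] .
lemma wtpos: "0 < wt p E h v" using wt_pos[OF p0 p1'] .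

lemma Wt_snoc': "Wt p E V (h @ [(q, a)]) = rho h q a * Wt p E V h"
proof -
  have "rho h q a * Wt p E V h = 2 * p * Wt p E V h + 2 * (1 - 2 * p) * SW p E V h q a"
    using Wpos[of h] unfolding rho_def by (simp add: field_simps)
  then show ?thesis using Wt_snoc[OF finV(1)] by simp
qed

lemma SWW_nonneg: "0 \<le> SW p E V h q a / Wt p E V h"
  using SW_nonneg[OF p0 p1', of E V h q a] Wpos[of h] by simp

lemma SWW_le1: "SW p E V h q a / Wt p E V h \<le> 1"
  using SW_le_Wt[OF finV(1) p0 p1', of E h q a] Wpos[of h] by simp

lemma rho_pos: "0 < rho h q a"
proof -
  have "0 \<le> SW p E V h q a / Wt p E V h" by (rule SWW_nonneg)
  then have "0 \<le> (1 - 2 * p) * (SW p E V h q a / Wt p E V h)" using p1 by (intro mult_nonneg_nonneg) auto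
  then show ?thesis unfolding rho_def using p0 by linarith
qed

lemma X_snoc: "X (h @ [(q, a)]) = X h + log 2 (fac p E (q, a) t) - log 2 (rho h q a)"
proof -
  have f: "0 < fac p E (q, a) t" using fac_pos[OF p0 p1'] .
  have eq: "wt p E (h @ [(q, a)]) t / Wt p E V (h @ [(q, a)]) = (wt p E h t / Wt p E V h) * (fac p E (q, a) t / rho h q a)"
    by (simp add: Wt_snoc')
  have "X (h @ [(q, a)]) = log 2 ((wt p E h t / Wt p E V h) * (fac p E (q, a) t / rho h q a))"
    unfolding X_def by (simp only: eq)
  also have "\<dots> = log 2 (wt p E h t / Wt p E V h) + log 2 (fac p E (q, a) t / rho h q a)"
    using wtpos[of h t] Wpos[of h] f rho_pos[of h q a] by (subst log_mult) auto
  finally have "X (h @ [(q, a)]) = log 2 (wt p E h t / Wt p E V h) + log 2 (fac p E (q, a) t / rho h q a)" .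
  also have "log 2 (fac p E (q, a) t / rho h q a) = log 2 (fac p E (q, a) t) - log 2 (rho h q a)"
    using f rho_pos[of h q a] by (simp add: log_divide)
  finally show ?thesis unfolding X_def by simp
qed

lemma X_le0: "X h \<le> 0"
proof -
  have "wt p E h t / Wt p E V h \<le> 1" using wt_le_Wt[OF finV(1) tV p0 p1'] Wpos by simp
  then show ?thesis unfolding X_def using wtpos Wpos by simp
qed

lemma X_Nil: "X [] = - log 2 (real (card V))"
proof -
  have "Wt p E V [] = real (card V)" by (simp add: Wt_def)
  then show ?thesis unfolding X_def using finV by (simp add: log_divide)
qed

lemma ask_V: "act p E V K h = Ask q \<Longrightarrow> q \<in> V"
proof -
  assume a: "act p E V K h = Ask q"
  have "Ask q \<in> set_pmf (salg p E V K h)" using a by (simp add: salg_def)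
  then show ?thesis using valid_salg[OF finV, of p E K] unfolding valid_alg_def by blast
qed

lemma ask_cnt: "act p E V K h = Ask q \<Longrightarrow> cnt h v < K"
  by (auto simp: act_def not_le split: if_splits)

lemma c_correct: "q \<in> V \<Longrightarrow> fst (adv h q) \<in> correct_answers E q t"
  using adv by (auto simp: valid_adversary_def)

lemma fac_c: "q \<in> V \<Longrightarrow> fac p E (q, fst (adv h q)) t = 2 * (1 - p)"
  using c_correct by (simp add: fac_def)

lemma fac_ge: "2 * p \<le> fac p E x t"
  using p1 by (simp add: fac_def)

lemma X_drift:
  assumes "q \<in> V"
  shows "p * X (h @ [(q, snd (adv h q))]) + (1 - p) * X (h @ [(q, fst (adv h q))]) \<ge>
     X h + Ip p - (p * log 2 (rho h q (snd (adv h q))) + (1 - p) * log 2 (rho h q (fst (adv h q))))"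
proof -
  have "Ip p \<le> p * log 2 (fac p E (q, snd (adv h q)) t) + (1 - p) * log 2 (2 * (1 - p))"
    by (rule drift_wt[OF p0 p1' fac_ge])
  then show ?thesis unfolding X_snoc fac_c[OF assms] by (simp add: algebra_simps)
qed

lemma good_query:
  assumes q: "q \<in> V" and c: "2 * SW p E V h q (fst (adv h q)) \<le> Wt p E V h"
    and ce: "SW p E V h q (fst (adv h q)) + SW p E V h q (snd (adv h q)) \<le> Wt p E V h"
  shows "p * log 2 (rho h q (snd (adv h q))) + (1 - p) * log 2 (rho h q (fst (adv h q))) \<le> 0"
proof -
  let ?W = "Wt p E V h"
  let ?sc = "SW p E V h q (fst (adv h q)) / ?W" and ?se = "SW p E V h q (snd (adv h q)) / ?W"
  have "?sc \<le> 1/2" using c Wpos by (simp add: field_simps)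
  moreover have "?sc + ?se \<le> 1" using ce Wpos by (simp add: field_simps add_divide_distrib[symmetric])
  moreover have "0 \<le> ?sc" "0 \<le> ?se" by (rule SWW_nonneg)+
  ultimately have "(1 - p) * log 2 (2 * p + 2 * (1 - 2 * p) * ?sc) + p * log 2 (2 * p + 2 * (1 - 2 * p) * ?se) \<le> 0"
    by (intro good_ineq[OF p0 p1]) auto
  then show ?thesis unfolding rho_def by simp
qed

lemma any_query:
  "p * log 2 (rho h q a) + (1 - p) * log 2 (rho h q b) \<le> 1"
proof -
  have r: "log 2 (rho h q x) \<le> 1" for x
  proof -
    have "0 \<le> SW p E V h q x / Wt p E V h" "SW p E V h q x / Wt p E V h \<le> 1"
      by (rule SWW_nonneg, rule SWW_le1)
    then show ?thesis unfolding rho_def by (intro rho_le1[OF p0 p1])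
  qed
  have 1: "p * log 2 (rho h q a) \<le> p * 1" using p0 r[of a] by (intro mult_left_mono) auto
  have 2: "(1 - p) * log 2 (rho h q b) \<le> (1 - p) * 1" using p1 r[of b] by (intro mult_left_mono) auto
  have "p * log 2 (rho h q a) + (1 - p) * log 2 (rho h q b) \<le> p * 1 + (1 - p) * 1"
    using 1 2 by linarith
  then show ?thesis by simp
qed

end



context srch begin

lemma regime:
  assumes a: "act p E V K h = Ask q"
  shows "(q = t \<and> heavy p E V h t) \<or>
    (2 * SW p E V h q (fst (adv h q)) \<le> Wt p E V h \<and>
     SW p E V h q (fst (adv h q)) + SW p E V h q (snd (adv h q)) \<le> Wt p E V h)"
proof (cases "\<exists>v. heavy p E V h v")
  case True
  let ?v = "SOME v. heavy p E V h v"
  have hv: "heavy p E V h ?v" using True by (rule someI_ex)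
  have q: "q = ?v" using a True by (auto simp: act_def split: if_splits)
  show ?thesis
  proof (cases "q = t")
    case True
    then show ?thesis using hv q by auto
  next
    case False
    have qV: "q \<in> V" using hv q by (simp add: heavy_def)
    have hq: "Wt p E V h < 2 * wt p E h q" using hv q by (simp add: heavy_def)
    obtain u where cu: "fst (adv h q) = Some u"
      using c_correct[OF qV, of h] False by (auto simp: correct_answers_def)
    have sc: "SW p E V h q (fst (adv h q)) \<le> Wt p E V h - wt p E h q"
      unfolding cu by (rule SW_Some[OF finV(1) p0 p1' qV])
    have se: "SW p E V h q (snd (adv h q)) \<le> wt p E h q \<or> SW p E V h q (snd (adv h q)) \<le> Wt p E V h - wt p E h q"
    proof (cases "snd (adv h q)")
      case None
      then show ?thesis using SW_None[OF qV] by simp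
    next
      case (Some u')
      then show ?thesis using SW_Some[OF finV(1) p0 p1' qV] by simp
    qed
    show ?thesis using sc se hq by auto
  qed
next
  case False
  have q: "q = median p E V h" using a False by (auto simp: act_def split: if_splits)
  have qV: "q \<in> V" and mn: "\<And>q'. q' \<in> V \<Longrightarrow> Phi p E V h q \<le> Phi p E V h q'"
    using median_ex[OF finV, of p E h] q by auto
  have all: "2 * SW p E V h q x \<le> Wt p E V h" for x
  proof (cases x)
    case None
    have "\<not> heavy p E V h q" using False by auto
    then show ?thesis using None SW_None[OF qV] qV by (simp add: heavy_def)
  next
    case (Some u)
    show ?thesis
    proof (cases "E q u")
      case True
      have "2 * (\<Sum>v\<in>{v\<in>V. gdist E u v + 1 = gdist E q v}. wt p E h v) \<le> (\<Sum>v\<in>V. wt p E h v)"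
        by (rule median_prop[OF g _ qV _ True]) (use wtpos less_imp_le mn in \<open>auto simp: Phi_def\<close>)
      then show ?thesis using SW_Some_med[of V p E q u h, OF finV(1) p0 p1' True] Some by (simp add: Wt_def)
    next
      case False
      then show ?thesis using Some SW_Some_nonE[of E q u] Wpos[of h] by simp
    qed
  qed
  show ?thesis using all[of "fst (adv h q)"] all[of "snd (adv h q)"] by simp
qed

definition Y where "Y h = real_of_int (min (cnt h t) K)"

lemma Y_le: "Y h \<le> K" by (simp add: Y_def)

lemma Y_drift:
  assumes a: "act p E V K h = Ask q"
  shows "p * Y (h @ [(q, snd (adv h q))]) + (1 - p) * Y (h @ [(q, fst (adv h q))]) \<ge>
     Y h + (if q = t then 1 - 2 * p else 0)"
proof (cases "q = t")
  case True
  have k: "cnt h t < K" using ask_cnt[OF a] .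
  have c: "fst (adv h q) = None" using c_correct[OF ask_V[OF a], of h] True by (simp add: correct_answers_def)
  have yc: "Y (h @ [(q, fst (adv h q))]) = Y h + 1" using k c True by (simp add: Y_def)
  have ye: "Y (h @ [(q, snd (adv h q))]) \<ge> Y h - 1" using k True by (simp add: Y_def)
  have "p * (Y h - 1) + (1 - p) * (Y h + 1) \<le> p * Y (h @ [(q, snd (adv h q))]) + (1 - p) * Y (h @ [(q, fst (adv h q))])"
    unfolding yc using ye p0 by (simp add: mult_left_mono)
  then show ?thesis using True by (simp add: algebra_simps)
next
  case False
  then show ?thesis by (simp add: Y_def algebra_simps)
qed

definition beta where "beta = 1 / (1 - 2 * p)"

lemma beta_pos: "0 < beta" using p1 by (simp add: beta_def)
lemma beta_mult: "beta * (1 - 2 * p) = 1" using p1 by (simp add: beta_def)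

definition F where "F s = (case s of Running h \<Rightarrow> X h + beta * Y h | Halted v \<Rightarrow> beta * K)"

lemma F_ask:
  assumes a: "act p E V K h = Ask q"
  shows "p * F (Running (h @ [(q, snd (adv h q))])) + (1 - p) * F (Running (h @ [(q, fst (adv h q))])) \<ge>
     F (Running h) + Ip p"
proof -
  let ?e = "snd (adv h q)" and ?c = "fst (adv h q)"
  let ?Q = "p * log 2 (rho h q ?e) + (1 - p) * log 2 (rho h q ?c)"
  have qV: "q \<in> V" by (rule ask_V[OF a])
  have xd: "p * X (h @ [(q, ?e)]) + (1 - p) * X (h @ [(q, ?c)]) \<ge> X h + Ip p - ?Q"
    by (rule X_drift[OF qV])
  have yd: "p * Y (h @ [(q, ?e)]) + (1 - p) * Y (h @ [(q, ?c)]) \<ge> Y h + (if q = t then 1 - 2 * p else 0)"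
    by (rule Y_drift[OF a])
  have key: "?Q \<le> beta * (if q = t then 1 - 2 * p else 0)"
  proof (cases "q = t \<and> heavy p E V h t")
    case True
    then show ?thesis using any_query[of h q ?e ?c] beta_mult by simp
  next
    case False
    then have "2 * SW p E V h q ?c \<le> Wt p E V h \<and> SW p E V h q ?c + SW p E V h q ?e \<le> Wt p E V h"
      using regime[OF a] by auto
    then have "?Q \<le> 0" using good_query[OF qV] by auto
    moreover have "0 \<le> beta * (if q = t then 1 - 2 * p else 0)" using beta_pos p1 by simp
    ultimately show ?thesis by linarith
  qed
  have yd': "beta * (p * Y (h @ [(q, ?e)]) + (1 - p) * Y (h @ [(q, ?c)])) \<ge> beta * (Y h + (if q = t then 1 - 2 * p else 0))"
    using yd beta_pos by (intro mult_left_mono) auto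
  show ?thesis unfolding F_def using xd yd' key by (simp add: algebra_simps)
qed

lemma F_step: "measure_pmf.expectation (step (salg p E V K) p adv s) F \<ge>
    F s + Ip p * measure_pmf.expectation (step (salg p E V K) p adv s) ind_run"
proof (cases s)
  case (Halted v)
  then show ?thesis by (simp add: step_Halted)
next
  case (Running h)
  show ?thesis
  proof (cases "act p E V K h")
    case (Output v)
    then have st: "step (salg p E V K) p adv (Running h) = return_pmf (Halted v)"
      by (intro step_Output) (simp add: salg_def)
    have "X h + beta * Y h \<le> beta * K" using X_le0[of h] Y_le[of h] beta_pos
      by (smt (verit) mult_left_mono)
    then show ?thesis using Running st by (simp add: F_def)
  next
    case (Ask q)
    have sa: "salg p E V K h = return_pmf (Ask q)" using Ask by (simp add: salg_def)
    show ?thesis using Running F_ask[OF Ask]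
      by (simp add: expectation_step_Ask[where alg="salg p E V K" and h=h and q=q, OF sa] p0 p1' less_imp_le algebra_simps)
  qed
qed

end



context srch begin

definition r where "r = (1 - p) / p"

lemma r_gt1: "1 < r" using p0 p1 by (simp add: r_def field_simps)
lemma r_pos: "0 < r" using r_gt1 by simp

definition G where "G s = (case s of
    Running h \<Rightarrow> (\<Sum>v\<in>fst ` set h - {t}. r powr real_of_int (cnt h v))
  | Halted v \<Rightarrow> (if v = t then 0 else r powr real_of_int K))"

lemma G_nonneg: "0 \<le> G s"
  by (auto simp: G_def split: state.split intro!: sum_nonneg)

lemma fin_q: "finite (fst ` set h - {t})" by simp

lemma G_ask:
  assumes a: "act p E V K h = Ask q"
  shows "p * G (Running (h @ [(q, snd (adv h q))])) + (1 - p) * G (Running (h @ [(q, fst (adv h q))])) \<le>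
     G (Running h) + 1"
proof (cases "q = t")
  case True
  have "G (Running (h @ [(q, x)])) = G (Running h)" for x
  proof -
    have "fst ` set (h @ [(q, x)]) - {t} = fst ` set h - {t}" using True by auto
    moreover have "cnt (h @ [(q, x)]) v = cnt h v" if "v \<noteq> t" for v using that True by simp
    ultimately show ?thesis unfolding G_def by (auto intro!: sum.cong)
  qed
  then show ?thesis by (simp add: algebra_simps)
next
  case False
  let ?Q = "fst ` set h - {t}"
  let ?f = "\<lambda>v. r powr real_of_int (cnt h v)"
  let ?R = "(\<Sum>v\<in>?Q - {q}. ?f v)"
  define d :: "nat option \<Rightarrow> int" where "d x = (if x = None then 1 else -1)" for x
  have Gn: "G (Running (h @ [(q, x)])) = r powr real_of_int (cnt h q + d x) + ?R" for x
  proof -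
    have s: "fst ` set (h @ [(q, x)]) - {t} = insert q ?Q" using False by auto
    have "G (Running (h @ [(q, x)])) = (\<Sum>v\<in>fst ` set (h @ [(q, x)]) - {t}. r powr real_of_int (cnt (h @ [(q, x)]) v))"
      by (simp only: G_def state.case)
    also have "\<dots> = (\<Sum>v\<in>insert q ?Q. r powr real_of_int (cnt (h @ [(q, x)]) v))"
      by (simp only: s)
    also have "\<dots> = r powr real_of_int (cnt (h @ [(q, x)]) q) + (\<Sum>v\<in>?Q - {q}. r powr real_of_int (cnt (h @ [(q, x)]) v))"
      by (rule sum.insert_remove) simp
    also have "(\<Sum>v\<in>?Q - {q}. r powr real_of_int (cnt (h @ [(q, x)]) v)) = ?R"
      by (intro sum.cong) auto
    finally show ?thesis by (simp add: d_def)
  qed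
  have Go: "?f q + ?R \<le> G (Running h) + 1"
  proof (cases "q \<in> ?Q")
    case True
    have "G (Running h) = ?f q + ?R" unfolding G_def using True by (simp add: sum.remove)
    then show ?thesis by simp
  next
    case False
    then have "q \<notin> fst ` set h" using \<open>q \<noteq> t\<close> by simp
    then have "cnt h q = 0" using cnt_queried by blast
    moreover have "?R = G (Running h)" unfolding G_def using False by simp
    ultimately show ?thesis by simp
  qed
  have c: "fst (adv h q) \<noteq> None" using c_correct[OF ask_V[OF a], of h] False by (auto simp: correct_answers_def)
  have pw: "r powr real_of_int (cnt h q + d x) = ?f q * r powr real_of_int (d x)" for x
    by (simp add: powr_add)
  have rr0: "1 * 1 \<le> r * r" by (rule mult_mono) (use r_gt1 in auto)
  then have rr: "1 \<le> r * r" by simp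
  have e1: "r powr real_of_int (d x) \<le> r" for x
    using r_gt1 rr by (auto simp: d_def powr_minus field_simps)
  have "p * r + (1 - p) * (1 / r) = 1" using p0 p1 by (simp add: r_def field_simps)
  moreover have "p * r powr real_of_int (d (snd (adv h q))) \<le> p * r" using e1 p0 by (intro mult_left_mono) auto
  moreover have "r powr real_of_int (d (fst (adv h q))) = 1 / r" using c r_pos by (auto simp: d_def powr_minus field_simps)
  ultimately have fac1: "p * r powr real_of_int (d (snd (adv h q))) + (1 - p) * r powr real_of_int (d (fst (adv h q))) \<le> 1"
    by simp
  have fq: "0 \<le> ?f q" by simp
  have "p * G (Running (h @ [(q, snd (adv h q))])) + (1 - p) * G (Running (h @ [(q, fst (adv h q))]))
     = ?f q * (p * r powr real_of_int (d (snd (adv h q))) + (1 - p) * r powr real_of_int (d (fst (adv h q)))) + ?R"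
    unfolding Gn pw by (simp add: algebra_simps)
  also have "\<dots> \<le> ?f q * 1 + ?R" using fac1 fq by (intro add_right_mono mult_left_mono) auto
  finally show ?thesis using Go by simp
qed

lemma out_cnt:
  assumes "act p E V K h = Output v"
  shows "K \<le> cnt h v"
proof -
  have ex: "\<exists>v. K \<le> cnt h v" using assms by (auto simp: act_def split: if_splits)
  then have "v = (SOME v. K \<le> cnt h v)" using assms by (auto simp: act_def)
  then show ?thesis using someI_ex[OF ex] by simp
qed

lemma G_step: "measure_pmf.expectation (step (salg p E V K) p adv s) (\<lambda>s. - G s) \<ge>
    - G s + (-1) * measure_pmf.expectation (step (salg p E V K) p adv s) ind_run"
proof (cases s)
  case (Halted v)
  then show ?thesis by (simp add: step_Halted)
next
  case (Running h)
  show ?thesis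
  proof (cases "act p E V K h")
    case (Output v)
    then have st: "step (salg p E V K) p adv (Running h) = return_pmf (Halted v)"
      by (intro step_Output) (simp add: salg_def)
    have "G (Halted v) \<le> G (Running h)"
    proof (cases "v = t")
      case True
      then show ?thesis using G_nonneg[of "Running h"] by (simp add: G_def)
    next
      case False
      have k: "K \<le> cnt h v" by (rule out_cnt[OF Output])
      then have "cnt h v \<noteq> 0" using K1 by simp
      then have vq: "v \<in> fst ` set h - {t}" using cnt_queried False by blast
      have "r powr real_of_int K \<le> r powr real_of_int (cnt h v)" using k r_gt1 by simp
      also have "\<dots> \<le> (\<Sum>v\<in>fst ` set h - {t}. r powr real_of_int (cnt h v))"
        by (rule member_le_sum[OF vq]) auto
      finally show ?thesis using False by (simp add: G_def)
    qed
    then show ?thesis using Running st by simp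
  next
    case (Ask q)
    have sa: "salg p E V K h = return_pmf (Ask q)" using Ask by (simp add: salg_def)
    show ?thesis using Running G_ask[OF Ask]
      by (simp add: expectation_step_Ask[where alg="salg p E V K" and h=h and q=q, OF sa] p0 p1' less_imp_le algebra_simps)
  qed
qed

end



context srch begin

abbreviation "alg \<equiv> salg p E V K"
abbreviation "Pr k \<equiv> run alg p adv k"

lemma fin_alg: "finite (set_pmf (alg h))" by (simp add: salg_def)
lemma fin_run: "finite (set_pmf (Pr k))" by (rule finite_run[OF fin_alg])

definition S where "S k = (\<Sum>j<k. measure_pmf.expectation (Pr (Suc j)) ind_run)"

definition Tb where "Tb = (log 2 (real (card V)) + beta * K) / Ip p"

lemma Ipos: "0 < Ip p" by (rule Ip_pos[OF p0 p1])

lemma exp_le_const: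
  fixes f :: "state \<Rightarrow> real" and b :: real
  assumes "\<And>s. f s \<le> b"
  shows "measure_pmf.expectation (Pr k) f \<le> b"
proof -
  have "measure_pmf.expectation (Pr k) f = (\<Sum>s\<in>set_pmf (Pr k). pmf (Pr k) s * f s)"
    by (rule expectation_finite_sum[OF fin_run])
  also have "\<dots> \<le> (\<Sum>s\<in>set_pmf (Pr k). pmf (Pr k) s * b)"
    by (intro sum_mono mult_left_mono assms) auto
  also have "\<dots> = b" using sum_pmf_eq_1[OF fin_run order.refl, of k] by (simp add: sum_distrib_right[symmetric])
  finally show ?thesis .
qed

lemma exp_mono:
  fixes f g :: "state \<Rightarrow> real"
  assumes "\<And>s. f s \<le> g s"
  shows "measure_pmf.expectation (Pr k) f \<le> measure_pmf.expectation (Pr k) g"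
  unfolding expectation_finite_sum[OF fin_run]
  by (intro sum_mono mult_left_mono assms) auto

lemma S_bound: "S k \<le> Tb"
proof -
  have "measure_pmf.expectation (Pr k) F \<ge> F (Running []) + Ip p * S k"
    unfolding S_def by (rule drift_lower[OF fin_alg F_step])
  moreover have "measure_pmf.expectation (Pr k) F \<le> beta * K"
  proof (rule exp_le_const)
    fix s show "F s \<le> beta * K"
    proof (cases s)
      case (Running h)
      have "X h + beta * Y h \<le> beta * K" using X_le0[of h] Y_le[of h] beta_pos
        by (smt (verit) mult_left_mono)
      then show ?thesis using Running by (simp add: F_def)
    qed (simp add: F_def)
  qed
  moreover have "F (Running []) = - log 2 (real (card V))"
    using K1 by (simp add: F_def X_Nil Y_def)
  ultimately have "Ip p * S k \<le> log 2 (real (card V)) + beta * K" by linarith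
  then show ?thesis unfolding Tb_def using Ipos by (simp add: field_simps)
qed

lemma S_nonneg_terms: "0 \<le> measure_pmf.expectation (Pr j) ind_run"
  by (simp add: expectation_ind_run)

lemma EQ: "expected_queries alg p adv \<le> ennreal Tb"
proof -
  have "(\<Sum>k<N. ennreal (measure_pmf.prob (Pr (Suc k)) {s. is_running s})) + 0 \<le> ennreal Tb" for N
  proof -
    have "(\<Sum>k<N. ennreal (measure_pmf.prob (Pr (Suc k)) {s. is_running s})) =
          ennreal (\<Sum>k<N. measure_pmf.prob (Pr (Suc k)) {s. is_running s})"
      by (rule sum_ennreal) simp
    also have "\<dots> = ennreal (S N)" by (simp add: S_def expectation_ind_run)
    also have "\<dots> \<le> ennreal Tb" using S_bound by (simp add: ennreal_leI)
    finally show ?thesis by simp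
  qed
  then have "(\<Sum>k. ennreal (measure_pmf.prob (Pr (Suc k)) {s. is_running s})) + 0 \<le> ennreal Tb"
    by (rule ennreal_suminf_bound_add)
  then show ?thesis by (simp add: expected_queries_def)
qed

definition ind_wr :: "state \<Rightarrow> real" where
  "ind_wr s = (case s of Halted v \<Rightarrow> (if v = t then 0 else 1) | Running h \<Rightarrow> 0)"
definition ind_ok :: "state \<Rightarrow> real" where
  "ind_ok s = (if s = Halted t then 1 else 0)"

lemma wrong_bound: "measure_pmf.expectation (Pr k) ind_wr \<le> Tb / r powr real_of_int K"
proof -
  have "measure_pmf.expectation (Pr k) (\<lambda>s. - G s) \<ge> - G (Running []) + (-1) * S k"
    unfolding S_def by (rule drift_lower[OF fin_alg G_step])
  moreover have "G (Running []) = 0" by (simp add: G_def)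
  moreover have "measure_pmf.expectation (Pr k) (\<lambda>s. - G s) = - measure_pmf.expectation (Pr k) G"
    by (rule Bochner_Integration.integral_minus)
  ultimately have eg: "measure_pmf.expectation (Pr k) G \<le> S k" by linarith
  have "measure_pmf.expectation (Pr k) (\<lambda>s. r powr real_of_int K * ind_wr s) \<le> measure_pmf.expectation (Pr k) G"
  proof (rule exp_mono)
    fix s show "r powr real_of_int K * ind_wr s \<le> G s"
      using G_nonneg[of s] by (auto simp: ind_wr_def G_def split: state.split)
  qed
  then have "r powr real_of_int K * measure_pmf.expectation (Pr k) ind_wr \<le> Tb"
    using eg S_bound[of k] by simp
  then show ?thesis using r_pos by (simp add: field_simps)
qed

lemma prob_ok: "measure_pmf.prob (Pr k) {Halted t} = measure_pmf.expectation (Pr k) ind_ok"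
proof -
  have "ind_ok = indicator {Halted t}" by (auto simp: ind_ok_def fun_eq_iff)
  then show ?thesis using Bochner_Integration.integral_indicator[of "measure_pmf (Pr k)" "{Halted t}"] by simp
qed

lemma ok_eq: "measure_pmf.expectation (Pr k) ind_ok =
   1 - measure_pmf.expectation (Pr k) ind_run - measure_pmf.expectation (Pr k) ind_wr"
proof -
  have pt: "ind_ok s = 1 - ind_run s - ind_wr s" for s
    by (cases s) (auto simp: ind_ok_def ind_wr_def ind_run_def is_running_def)
  show ?thesis unfolding expectation_finite_sum[OF fin_run] pt
    using sum_pmf_eq_1[OF fin_run order.refl, of k]
    by (simp add: algebra_simps sum_subtractf sum_distrib_left sum.distrib)
qed

lemma succ: "success_prob alg p adv t \<ge> 1 - Tb / r powr real_of_int K"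
proof (rule field_le_epsilon)
  fix e :: real assume e: "0 < e"
  let ?a = "\<lambda>j. measure_pmf.expectation (Pr j) ind_run"
  have "summable (\<lambda>j. ?a (Suc j))"
  proof (rule bounded_imp_summable)
    fix n show "0 \<le> ?a (Suc n)" by (rule S_nonneg_terms)
    show "(\<Sum>k\<le>n. ?a (Suc k)) \<le> Tb" using S_bound[of "Suc n"] by (simp add: S_def lessThan_Suc_atMost)
  qed
  then have "(\<lambda>j. ?a (Suc j)) \<longlonglongrightarrow> 0" by (rule summable_LIMSEQ_zero)
  then obtain j where j: "\<bar>?a (Suc j)\<bar> < e" using e by (auto simp: lim_sequentially dist_real_def)
  have "1 - Tb / r powr real_of_int K \<le> measure_pmf.expectation (Pr (Suc j)) ind_ok + e"
    using ok_eq[of "Suc j"] wrong_bound[of "Suc j"] j by linarith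
  also have "measure_pmf.expectation (Pr (Suc j)) ind_ok \<le> success_prob alg p adv t"
    unfolding success_prob_def prob_ok[symmetric]
    by (rule cSUP_upper) (auto intro!: bdd_aboveI[of _ 1])
  finally show "1 - Tb / r powr real_of_int K \<le> success_prob alg p adv t + e" by simp
qed

end



lemma constants:
  fixes \<beta> r I :: real
  assumes b: "0 < \<beta>" and r: "1 < r" and I: "0 < I"
  shows "\<exists>C. \<forall>(n::real) \<delta>. 2 \<le> n \<longrightarrow> 0 < \<delta> \<longrightarrow> \<delta> < 1/2 \<longrightarrow>
     (\<exists>k::nat. (1::nat) \<le> k \<and> (log 2 n + \<beta> * k) / I \<le> \<delta> * r powr k \<and>
        \<beta> * k \<le> C * log 2 (log 2 n) + C * log 2 (1 / \<delta>))"
proof -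
  obtain m :: nat where m: "8 < r ^ m" using real_arch_pow[OF r] by blast
  have m1: "1 \<le> m" using m by (cases m) auto
  define M where "M = (1 + \<beta> * m) / I"
  have Mpos: "0 < M" using b I by (simp add: M_def add_pos_nonneg)
  define L where "L = max 0 (log 2 M)"
  define C where "C = \<beta> * m * (2 + L)"
  show ?thesis
  proof (rule exI[of _ C], intro allI impI)
    fix n \<delta> :: real
    assume n: "2 \<le> n" and d0: "0 < \<delta>" and d1: "\<delta> < 1/2"
    define LL where "LL = log 2 (log 2 n)"
    define Ld where "Ld = log 2 (1 / \<delta>)"
    have ln1: "1 \<le> log 2 n" using n by simp
    have LL0: "0 \<le> LL" using ln1 by (simp add: LL_def)
    have Ld1: "1 \<le> Ld" using d0 d1 by (simp add: Ld_def field_simps)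
    define x where "x = LL + Ld"
    have x1: "1 \<le> x" using LL0 Ld1 by (simp add: x_def)
    have L0: "0 \<le> L" by (simp add: L_def)
    define j where "j = nat \<lceil>x + L\<rceil>"
    have j1: "x + L \<le> real j" unfolding j_def by linarith
    have j2: "real j \<le> x + L + 1" unfolding j_def using x1 L0 by linarith
    have jge1: "1 \<le> j" using j1 x1 L0 by linarith
    define k where "k = m * j"
    have k1: "1 \<le> k" using m1 jge1 by (simp add: k_def)
    have bk: "\<beta> * k \<le> C * LL + C * Ld"
    proof -
      have "(1 + L) * 1 \<le> (1 + L) * x" using x1 L0 by (intro mult_left_mono) auto
      then have "1 + L \<le> (1 + L) * x" by simp
      moreover have "(2 + L) * x = x + (1 + L) * x" by (simp add: algebra_simps)
      ultimately have "real j \<le> (2 + L) * x" using j2 by linarith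
      then have "\<beta> * m * real j \<le> \<beta> * m * ((2 + L) * x)" using b by (intro mult_left_mono) auto
      then show ?thesis by (simp add: k_def C_def x_def algebra_simps)
    qed
    have p2j: "(2::real) ^ j = 2 powr real j" by (simp add: powr_realpow)
    have A: "log 2 n / \<delta> \<le> 2 ^ j"
    proof -
      have "log 2 n / \<delta> = 2 powr LL * 2 powr Ld"
        using ln1 d0 by (simp add: LL_def Ld_def)
      also have "\<dots> = 2 powr x" by (simp add: x_def powr_add)
      also have "\<dots> \<le> 2 powr real j" using j1 L0 by simp
      finally show ?thesis by (simp add: p2j)
    qed
    have B: "M \<le> 2 ^ j"
    proof -
      have "M = 2 powr (log 2 M)" using Mpos by simp
      also have "\<dots> \<le> 2 powr real j" using j1 x1 by (simp add: L_def)
      finally show ?thesis by (simp add: p2j)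
    qed
    have Cc: "real j \<le> 2 ^ j" using less_exp[of j] by (metis of_nat_le_iff of_nat_numeral of_nat_power less_imp_le)
    have rk: "8 ^ j \<le> r powr real k"
    proof -
      have "(8::real) ^ j \<le> (r ^ m) ^ j" using m by (intro power_mono) auto
      also have "\<dots> = r ^ k" by (simp add: k_def power_mult)
      also have "\<dots> = r powr real k" using r by (simp add: powr_realpow)
      finally show ?thesis .
    qed
    have "(log 2 n / \<delta>) * M * real j \<le> 2 ^ j * 2 ^ j * 2 ^ j"
      using A B Cc ln1 d0 Mpos by (intro mult_mono) auto
    also have "\<dots> = 8 ^ j" by (simp flip: power_mult_distrib)
    also have "\<dots> \<le> r powr real k" by (rule rk)
    finally have main: "(log 2 n / \<delta>) * M * real j \<le> r powr real k" .
    have "(log 2 n + \<beta> * k) \<le> log 2 n * ((1 + \<beta> * m) * real j)"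
    proof -
      have "log 2 n * ((1 + \<beta> * m) * real j) = log 2 n * real j + log 2 n * (\<beta> * m * real j)"
        by (simp add: algebra_simps)
      moreover have "log 2 n \<le> log 2 n * real j" using ln1 jge1 by simp
      moreover have "\<beta> * m * real j \<le> log 2 n * (\<beta> * m * real j)"
      proof -
        have "0 \<le> \<beta> * m * real j" using b by simp
        then have "1 * (\<beta> * m * real j) \<le> log 2 n * (\<beta> * m * real j)" using ln1 by (intro mult_right_mono) auto
        then show ?thesis by simp
      qed
      ultimately show ?thesis by (simp add: k_def)
    qed
    then have "(log 2 n + \<beta> * k) / I \<le> log 2 n * ((1 + \<beta> * m) * real j) / I"
      using I by (simp add: divide_right_mono)
    also have "\<dots> = \<delta> * ((log 2 n / \<delta>) * M * real j)" using d0 I by (simp add: M_def field_simps)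
    also have "\<dots> \<le> \<delta> * r powr real k" using main d0 by (intro mult_left_mono) auto
    finally show "\<exists>k::nat. (1::nat) \<le> k \<and> (log 2 n + \<beta> * k) / I \<le> \<delta> * r powr k \<and>
        \<beta> * k \<le> C * log 2 (log 2 n) + C * log 2 (1 / \<delta>)"
      using k1 bk unfolding LL_def Ld_def by blast
  qed
qed



theorem theorem3:
  fixes p :: real
  assumes "0 < p" and "p < 1/2"
  shows "\<exists>C n0. \<forall>(V :: nat set) E (\<delta> :: real).
           graph_ok V E \<longrightarrow> card V \<ge> n0 \<longrightarrow> 0 < \<delta> \<longrightarrow> \<delta> < 1/2 \<longrightarrow>
           (\<exists>alg. valid_alg V alg \<and>
              (\<forall>t\<in>V. \<forall>adv. valid_adversary V E t adv \<longrightarrow>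
                 expected_queries alg p adv \<le>
                   ennreal ((1 / Ip p) * (log 2 (card V) + C * log 2 (log 2 (card V))
                                          + C * log 2 (1 / \<delta>))) \<and>
                 success_prob alg p adv t \<ge> 1 - \<delta>))"
proof -
  have b: "0 < 1 / (1 - 2 * p)" using assms by simp
  have r: "1 < (1 - p) / p" using assms by (simp add: field_simps)
  have I: "0 < Ip p" by (rule Ip_pos[OF assms])
  obtain C where HC: "\<forall>(n::real) \<delta>. 2 \<le> n \<longrightarrow> 0 < \<delta> \<longrightarrow> \<delta> < 1/2 \<longrightarrow>
     (\<exists>k::nat. (1::nat) \<le> k \<and> (log 2 n + (1 / (1 - 2 * p)) * k) / Ip p \<le> \<delta> * ((1 - p) / p) powr k \<and>
        (1 / (1 - 2 * p)) * k \<le> C * log 2 (log 2 n) + C * log 2 (1 / \<delta>))"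
    using constants[OF b r I] by blast
  show ?thesis
  proof (rule exI[of _ C], rule exI[of _ 2], intro allI impI)
    fix V :: "nat set" and E and \<delta> :: real
    assume g: "graph_ok V E" and n: "2 \<le> card V" and d0: "0 < \<delta>" and d1: "\<delta> < 1/2"
    have n': "2 \<le> real (card V)" using n by simp
    obtain k :: nat where k1: "1 \<le> k"
      and kb: "(log 2 (card V) + (1 / (1 - 2 * p)) * k) / Ip p \<le> \<delta> * ((1 - p) / p) powr k"
      and kc: "(1 / (1 - 2 * p)) * k \<le> C * log 2 (log 2 (card V)) + C * log 2 (1 / \<delta>)"
      using HC n' d0 d1 by blast
    have finV: "finite V" "V \<noteq> {}" using g by (auto simp: graph_ok_def)
    show "\<exists>alg. valid_alg V alg \<and>
              (\<forall>t\<in>V. \<forall>adv. valid_adversary V E t adv \<longrightarrow>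
                 expected_queries alg p adv \<le>
                   ennreal ((1 / Ip p) * (log 2 (card V) + C * log 2 (log 2 (card V))
                                          + C * log 2 (1 / \<delta>))) \<and>
                 success_prob alg p adv t \<ge> 1 - \<delta>)"
    proof (rule exI[of _ "salg p E V (int k)"], intro conjI ballI allI impI)
      show "valid_alg V (salg p E V (int k))" by (rule valid_salg[OF finV])
    next
      fix t adv assume tV: "t \<in> V" and adv: "valid_adversary V E t adv"
      interpret S: srch p E V "int k" t adv
        using g assms tV adv k1 by unfold_locales auto
      have beta: "S.beta = 1 / (1 - 2 * p)" by (simp add: S.beta_def)
      have rr: "S.r = (1 - p) / p" by (simp add: S.r_def)
      have Tb: "S.Tb = (log 2 (card V) + (1 / (1 - 2 * p)) * k) / Ip p" by (simp add: S.Tb_def beta)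
      have "S.Tb \<le> (1 / Ip p) * (log 2 (card V) + C * log 2 (log 2 (card V)) + C * log 2 (1 / \<delta>))"
        unfolding Tb using kc I by (simp add: divide_right_mono)
      then show "expected_queries (salg p E V (int k)) p adv \<le>
                   ennreal ((1 / Ip p) * (log 2 (card V) + C * log 2 (log 2 (card V)) + C * log 2 (1 / \<delta>)))"
        using S.EQ order.trans ennreal_leI by blast
    next
      fix t adv assume tV: "t \<in> V" and adv: "valid_adversary V E t adv"
      interpret S: srch p E V "int k" t adv
        using g assms tV adv k1 by unfold_locales auto
      have beta: "S.beta = 1 / (1 - 2 * p)" by (simp add: S.beta_def)
      have rr: "S.r = (1 - p) / p" by (simp add: S.r_def)
      have Tb: "S.Tb = (log 2 (card V) + (1 / (1 - 2 * p)) * k) / Ip p" by (simp add: S.Tb_def beta)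
      have rp: "0 < S.r powr real_of_int (int k)" using S.r_pos by simp
      have "S.Tb \<le> \<delta> * S.r powr real_of_int (int k)" using kb unfolding Tb rr by simp
      then have "S.Tb / S.r powr real_of_int (int k) \<le> \<delta>"
        using rp by (simp add: pos_divide_le_eq)
      then show "1 - \<delta> \<le> success_prob (salg p E V (int k)) p adv t"
        using S.succ by linarith
    qed
  qed
qed



end
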